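(* Let $t>204$ be an integer and $P(x,y)=x^{4}+4tx^{3}y-6tx^{2}y^{2}-4t^{2}xy^{3}+t^{2}y^{4}$. Fix complex numbers $\alpha,\beta$ with $\alpha^4=1+i\sqrt t$ and $\beta^4=-1+i\sqrt t$, and for integers $x,y$ put $\xi(x,y)=\sqrt2\,\alpha\,(x-i\sqrt t\,y)$, $\eta(x,y)=\sqrt2\,\beta\,(x+i\sqrt t\,y)$ and $z(x,y)=1-\left(\eta(x,y)/\xi(x,y)\right)^4$. Suppose $(x,y)$ is a pair of positive integers with $0<P(x,y)\le t^2$ and $xy>64t^3$, and let $\omega_j\in\{1,i,-1,-i\}$ satisfy $$\left|\omega_j-\frac{\eta(x,y)}{\xi(x,y)}\right|=\min_{0\le k\le 3}\left|e^{k\pi i/2}-\frac{\eta(x,y)}{\xi(x,y)}\right|.$$ Then $\left|\omega_j-\frac{\eta(x,y)}{\xi(x,y)}\right|<\frac{\pi}{12}\,|z(x,y)|$.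
   Context: Note $\xi^4=4(\sqrt{-t}+1)(x-\sqrt{-t}y)^4$, $\eta^4=4(\sqrt{-t}-1)(x+\sqrt{-t}y)^4$ and $P=\frac18(\xi^4-\eta^4)$, with $\sqrt{-t}=i\sqrt t$. *)

theory Defs
  imports Complex_Main
begin

definition Pform :: "int \<Rightarrow> int \<Rightarrow> int \<Rightarrow> int" where
  "Pform t x y = x^4 + 4*t*x^3*y - 6*t*x^2*y^2 - 4*t^2*x*y^3 + t^2*y^4"

definition xi_fn :: "int \<Rightarrow> complex \<Rightarrow> int \<Rightarrow> int \<Rightarrow> complex" where
  "xi_fn t \<alpha> x y = complex_of_real (sqrt 2) * \<alpha> *
     (of_int x - \<i> * complex_of_real (sqrt (of_int t)) * of_int y)"

definition eta_fn :: "int \<Rightarrow> complex \<Rightarrow> int \<Rightarrow> int \<Rightarrow> complex" where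
  "eta_fn t \<beta> x y = complex_of_real (sqrt 2) * \<beta> *
     (of_int x + \<i> * complex_of_real (sqrt (of_int t)) * of_int y)"

definition z_fn :: "int \<Rightarrow> complex \<Rightarrow> complex \<Rightarrow> int \<Rightarrow> int \<Rightarrow> complex" where
  "z_fn t \<alpha> \<beta> x y = 1 - (eta_fn t \<beta> x y / xi_fn t \<alpha> x y) ^ 4"

end

theory Submission imports Defs "HOL-Analysis.Analysis" begin
lemma e1: "exp (of_nat 1 * of_real pi * \<i> / 2) = \<i>"
proof -
  have "exp (of_nat 1 * of_real pi * \<i> / 2) = cis (pi/2)" by (simp add: cis_conv_exp mult.commute)
  thus ?thesis by simp
qed
lemma e2: "exp (of_nat 2 * of_real pi * \<i> / 2) = -1"
  by (simp add: exp_pi_i)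
lemma e3: "exp (of_nat 3 * of_real pi * \<i> / 2) = -\<i>"
proof -
  have "of_nat 3 * of_real pi * \<i> / 2 = of_real pi * \<i> + of_nat 1 * of_real pi * \<i> / 2" by simp
  then have "exp (of_nat 3 * of_real pi * \<i> / 2) = exp (of_real pi * \<i>) * exp (of_nat 1 * of_real pi * \<i> / 2)"
    by (metis exp_add)
  thus ?thesis using e1 exp_pi_i by simp
qed

lemma key:
  fixes u :: complex
  assumes h1: "cmod (1-u) \<le> cmod (1+u)" and h2: "cmod (1-u) \<le> cmod (u - \<i>)"
    and h3: "cmod (1-u) \<le> cmod (u + \<i>)" and hs: "cmod (1 - u^4) < 1/10^8" and hn: "u^4 \<noteq> 1"
  shows "cmod (1-u) < pi/12 * cmod (1 - u^4)"
proof -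
  define a where "a = cmod (1-u)"
  define b where "b = cmod (1+u)"
  define p where "p = cmod (u-\<i>)"
  define q where "q = cmod (u+\<i>)"
  define c where "c = cmod (1+u^2)"
  have f1: "1 - u^4 = (1-u)*(1+u)*((u-\<i>)*(u+\<i>))" by (simp add: algebra_simps power4_eq_xxxx power2_eq_square)
  have f2: "1 - u^4 = (1-u)*(1+u)*(1+u^2)" by (simp add: algebra_simps power4_eq_xxxx power2_eq_square)
  have m1: "cmod (1-u^4) = a*b*(p*q)" unfolding a_def b_def p_def q_def f1 by (simp add: norm_mult)
  have m2: "cmod (1-u^4) = a*b*c" unfolding a_def b_def c_def f2 by (simp add: norm_mult)
  have a0: "a \<ge> 0" unfolding a_def by simp
  have "a^4 = a*a*(a*a)" by (simp add: power4_eq_xxxx)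
  also have "\<dots> \<le> a*b*(p*q)"
    using h1 h2 h3 a0 unfolding a_def[symmetric] b_def[symmetric] p_def[symmetric] q_def[symmetric]
    by (intro mult_mono) auto
  finally have "a^4 < 1/10^8" using m1 hs by simp
  then have asm: "a < 1/100"
  proof -
    assume H: "a^4 < 1/10^8"
    show "a < 1/100"
    proof (rule ccontr)
      assume "\<not> a < 1/100"
      then have "(1/100::real)^4 \<le> a^4" by (intro power_mono) auto
      moreover have "(1/100::real)^4 = 1/10^8" by (simp add: power4_eq_xxxx)
      ultimately show False using H by linarith
    qed
  qed
  have apos: "a > 0"
  proof -
    have "u \<noteq> 1" using hn by auto
    thus ?thesis unfolding a_def by simp
  qed
  have bl: "b \<ge> 2 - a"
  proof -
    have "cmod ((1+u) + (1-u)) \<le> b + a" unfolding a_def b_def by (rule norm_triangle_ineq)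
    thus ?thesis by simp
  qed
  have bu: "b \<le> 2 + a"
  proof -
    have "cmod (2 - (1-u)) \<le> cmod (2::complex) + a" unfolding a_def by (rule norm_triangle_ineq4)
    moreover have "2 - (1-u) = 1 + u" by simp
    ultimately show ?thesis unfolding b_def by simp
  qed
  have cl: "c \<ge> 2 - a*b"
  proof -
    have "cmod ((1+u^2) + (1-u^2)) \<le> c + cmod (1-u^2)" unfolding c_def by (rule norm_triangle_ineq)
    moreover have "1 - u^2 = (1-u)*(1+u)" by (simp add: algebra_simps power2_eq_square)
    moreover have "(1+u^2) + (1-u^2) = 2" by simp
    ultimately have "2 \<le> c + cmod (1-u) * cmod (1+u)" by (metis norm_mult norm_numeral)
    thus ?thesis unfolding a_def b_def by simp
  qed
  have b0: "b \<ge> 199/100" using bl asm by simp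
  have ab: "a*b \<le> (1/100)*(2 + 1/100)" using asm bu a0 b0 by (intro mult_mono) auto
  have c0: "c \<ge> 197/100" using cl ab by simp
  have "(199/100)*(197/100) \<le> b*c" using b0 c0 by (intro mult_mono) auto
  then have bc: "b*c > 12/pi"
  proof -
    assume H: "(199/100)*(197/100) \<le> b*c"
    have "12/pi < 12/3.14" using pi_approx(1) by (intro divide_strict_left_mono) auto
    with H show ?thesis by simp
  qed
  then have "1 < pi/12 * (b*c)" using pi_gt_zero by (simp add: field_simps)
  then have "a*1 < a*(pi/12*(b*c))" using apos by (intro mult_strict_left_mono) auto
  thus ?thesis unfolding m2 a_def[symmetric] by (simp add: algebra_simps)
qed

lemma ident:
  fixes I S T a b :: complex
  assumes "I^2 = -1" "S^2 = T"
  shows "4 * (1 + I * S) * (a - I * S * b) ^ 4 - 4 * (- 1 + I * S) * (a + I * S * b) ^ 4 =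
     8 * (a ^ 4 + 4 * T * a ^ 3 * b - 6 * T * a^2 * b^2 - 4 * T^2 * a * b ^ 3 + T^2 * b ^ 4)"
  using assms by algebra

lemma rot: "cmod (\<i> * z) = cmod z" by (simp add: norm_mult)

lemma main2:
  fixes w \<omega> :: complex
  assumes "\<omega> \<in> {1, \<i>, -1, -\<i>}"
    and g1: "cmod (\<omega> - w) \<le> cmod (1 - w)" and g2: "cmod (\<omega> - w) \<le> cmod (\<i> - w)"
    and g3: "cmod (\<omega> - w) \<le> cmod (-1 - w)" and g4: "cmod (\<omega> - w) \<le> cmod (-\<i> - w)"
    and hs: "cmod (1 - w^4) < 1/10^8" and hn: "w^4 \<noteq> 1"
  shows "cmod (\<omega> - w) < pi/12 * cmod (1 - w^4)"
  using assms(1)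
proof (elim insertE emptyE)
  have e1: "cmod (-1 - w) = cmod (1 + w)" by (metis minus_diff_eq norm_minus_cancel diff_minus_eq_add add.commute)
  have e2: "cmod (\<i> - w) = cmod (w - \<i>)" by (rule norm_minus_commute)
  have e3: "cmod (-\<i> - w) = cmod (w + \<i>)" by (metis minus_diff_eq norm_minus_cancel diff_minus_eq_add add.commute)
  {
    assume o: "\<omega> = 1"
    show ?thesis using key[of w] g1 g2 g3 g4 hs hn e1 e2 e3 o by simp
  next
    assume o: "\<omega> = \<i>"
    define u where "u = - \<i> * w"
    have u4: "u^4 = w^4" unfolding u_def by (simp add: power_mult_distrib)
    have "\<i> - w = \<i> * (1 - u)" unfolding u_def by (simp add: algebra_simps)
    then have k1: "cmod (1-u) = cmod (\<i> - w)" by (metis rot)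
    have "-\<i> - w = -(\<i> * (1 + u))" unfolding u_def by (simp add: algebra_simps)
    then have k2: "cmod (1+u) = cmod (-\<i> - w)" by (metis rot norm_minus_cancel)
    have "-1 - w = -(\<i> * (u - \<i>))" unfolding u_def by (simp add: algebra_simps)
    then have k3: "cmod (u-\<i>) = cmod (-1 - w)" by (metis rot norm_minus_cancel)
    have "1 - w = -(\<i> * (u + \<i>))" unfolding u_def by (simp add: algebra_simps)
    then have k4: "cmod (u+\<i>) = cmod (1 - w)" by (metis rot norm_minus_cancel)
    show ?thesis using key[of u] g1 g2 g3 g4 hs hn k1 k2 k3 k4 u4 o by simp
  next
    assume o: "\<omega> = -1"
    define u where "u = - w"
    have u4: "u^4 = w^4" unfolding u_def by (simp add: power_mult_distrib)
    have k1: "cmod (1-u) = cmod (-1 - w)" unfolding u_def by (metis minus_diff_eq norm_minus_cancel diff_minus_eq_add add.commute)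
    have k2: "cmod (1+u) = cmod (1 - w)" unfolding u_def by simp
    have k3: "cmod (u-\<i>) = cmod (\<i> + w)" unfolding u_def by (metis minus_diff_eq norm_minus_cancel diff_minus_eq_add add.commute)
    have k3': "cmod (\<i> + w) = cmod (-\<i> - w)" by (metis minus_diff_eq norm_minus_cancel diff_minus_eq_add add.commute)
    have k4: "cmod (u+\<i>) = cmod (\<i> - w)" unfolding u_def by simp
    show ?thesis using key[of u] g1 g2 g3 g4 hs hn k1 k2 k3 k3' k4 u4 o by simp
  next
    assume o: "\<omega> = -\<i>"
    define u where "u = \<i> * w"
    have u4: "u^4 = w^4" unfolding u_def by (simp add: power_mult_distrib)
    have "-\<i> - w = -\<i> * (1 - u)" unfolding u_def by (simp add: algebra_simps)
    then have k1: "cmod (1-u) = cmod (-\<i> - w)" by (simp add: norm_mult)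
    have "\<i> - w = -\<i> * (-1 - u)" unfolding u_def by (simp add: algebra_simps)
    then have k2: "cmod (1+u) = cmod (\<i> - w)" by (metis rot norm_minus_cancel minus_diff_eq diff_minus_eq_add add.commute norm_mult norm_ii mult_1)
    have "1 - w = \<i> * (u - \<i>)" unfolding u_def by (simp add: algebra_simps)
    then have k3: "cmod (u-\<i>) = cmod (1 - w)" by (simp add: norm_mult)
    have "-1 - w = \<i> * (u + \<i>)" unfolding u_def by (simp add: algebra_simps)
    then have k4: "cmod (u+\<i>) = cmod (-1 - w)" by (simp add: norm_mult)
    show ?thesis using key[of u] g1 g2 g3 g4 hs hn k1 k2 k3 k4 u4 o by simp
  }
qed

theorem lemma3p2:
  fixes t x y :: int and \<alpha> \<beta> \<omega> :: complex
  assumes "t > 204"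
    and "\<alpha> ^ 4 = 1 + \<i> * complex_of_real (sqrt (of_int t))"
    and "\<beta> ^ 4 = -1 + \<i> * complex_of_real (sqrt (of_int t))"
    and "x > 0" and "y > 0"
    and "0 < Pform t x y" and "Pform t x y \<le> t^2"
    and "x * y > 64 * t^3"
    and "\<omega> \<in> {1, \<i>, -1, -\<i>}"
    and "cmod (\<omega> - eta_fn t \<beta> x y / xi_fn t \<alpha> x y) =
         Min ((\<lambda>k::nat. cmod (exp (of_nat k * of_real pi * \<i> / 2) - eta_fn t \<beta> x y / xi_fn t \<alpha> x y)) ` {0..3})"
  shows "cmod (\<omega> - eta_fn t \<beta> x y / xi_fn t \<alpha> x y) < pi / 12 * cmod (z_fn t \<alpha> \<beta> x y)"
proof -
  define w where "w = eta_fn t \<beta> x y / xi_fn t \<alpha> x y"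
  define f where "f = (\<lambda>k::nat. cmod (exp (of_nat k * of_real pi * \<i> / 2) - w))"
  have mn: "cmod (\<omega> - w) = Min (f ` {0..3})" using assms(10) unfolding w_def f_def by simp
  have le: "cmod (\<omega> - w) \<le> f k" if "k \<in> {0..3}" for k
    unfolding mn by (rule Min_le) (use that in auto)
  have g1: "cmod (\<omega> - w) \<le> cmod (1 - w)" using le[of 0] unfolding f_def by simp
  have g2: "cmod (\<omega> - w) \<le> cmod (\<i> - w)" using le[of 1] e1 unfolding f_def by simp
  have g3: "cmod (\<omega> - w) \<le> cmod (-1 - w)" using le[of 2] e2 unfolding f_def by simp
  have g4: "cmod (\<omega> - w) \<le> cmod (-\<i> - w)" using le[of 3] e3 unfolding f_def by simp
  define s where "s = sqrt (real_of_int t)"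
  define S where "S = complex_of_real s"
  have t1: "real_of_int t \<ge> 1" using assms(1) by simp
  have s2: "s^2 = real_of_int t" unfolding s_def using t1 by simp
  have S2: "S^2 = of_int t" unfolding S_def by (metis of_real_power s2 of_real_of_int_eq)
  define X where "X = (of_int x - \<i> * S * of_int y :: complex)"
  define Y where "Y = (of_int x + \<i> * S * of_int y :: complex)"
  have r2: "complex_of_real (sqrt 2) ^ 4 = 4"
  proof -
    have "sqrt (2::real) ^ 4 = 4" by (simp add: power4_eq_xxxx)
    thus ?thesis by (metis of_real_power of_real_numeral)
  qed
  have xi4: "xi_fn t \<alpha> x y ^ 4 = 4 * (1 + \<i> * S) * X ^ 4"
    unfolding xi_fn_def X_def S_def s_def by (simp add: power_mult_distrib r2 assms(2))
  have eta4: "eta_fn t \<beta> x y ^ 4 = 4 * (-1 + \<i> * S) * Y ^ 4"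
    unfolding eta_fn_def Y_def S_def s_def by (simp add: power_mult_distrib r2 assms(3))
  have diff: "4 * (1 + \<i> * S) * X ^ 4 - 4 * (-1 + \<i> * S) * Y ^ 4 = 8 * of_int (Pform t x y)"
  proof -
    have ii: "\<i>^2 = (-1::complex)" by simp
    show ?thesis unfolding X_def Y_def Pform_def of_int_add of_int_diff of_int_mult of_int_power of_int_numeral
      using ident[OF ii S2] by simp
  qed
  have ReX: "Re X = real_of_int x" and ImX: "Im X = - s * real_of_int y" unfolding X_def S_def by simp_all
  have X2: "cmod X ^ 2 = real_of_int x ^ 2 + real_of_int t * real_of_int y ^ 2"
    unfolding cmod_power2 ReX ImX using s2 by (simp add: power_mult_distrib)
  have X0: "X \<noteq> 0" using ReX assms(4) by auto
  have A1: "cmod (1 + \<i> * S) \<ge> 1"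
  proof -
    have "Re (1 + \<i> * S) = 1" unfolding S_def by simp
    thus ?thesis by (metis abs_Re_le_cmod abs_one)
  qed
  have A0: "1 + \<i> * S \<noteq> 0" using A1 by auto
  have xi0: "xi_fn t \<alpha> x y ^ 4 \<noteq> 0" unfolding xi4 using X0 A0
    by (metis mult_eq_0_iff power_eq_0_iff zero_neq_numeral)
  have z: "z_fn t \<alpha> \<beta> x y = 1 - w^4" unfolding z_fn_def w_def ..
  have w4: "w^4 = eta_fn t \<beta> x y ^ 4 / xi_fn t \<alpha> x y ^ 4" unfolding w_def by (simp add: power_divide)
  have zeq: "1 - w^4 = 8 * of_int (Pform t x y) / xi_fn t \<alpha> x y ^ 4"
  proof -
    have d: "xi_fn t \<alpha> x y ^ 4 - eta_fn t \<beta> x y ^ 4 = 8 * of_int (Pform t x y)"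
      using diff unfolding xi4 eta4 .
    have "1 - w^4 = (xi_fn t \<alpha> x y ^ 4 - eta_fn t \<beta> x y ^ 4) / xi_fn t \<alpha> x y ^ 4"
      unfolding w4 using xi0 by (simp add: diff_divide_distrib)
    thus ?thesis unfolding d .
  qed
  define xr where "xr = real_of_int x"
  define yr where "yr = real_of_int y"
  define tr where "tr = real_of_int t"
  define P where "P = real_of_int (Pform t x y)"
  have P0: "P > 0" and Pt: "P \<le> tr^2" unfolding P_def tr_def using assms(6,7) by simp_all
  have xy: "xr * yr > 64 * tr^3" unfolding xr_def yr_def tr_def using assms(8)
    by (metis of_int_less_iff of_int_mult of_int_power of_int_numeral)
  have tr1: "tr > 204" unfolding tr_def using assms(1) by simp
  have xr0: "xr > 0" "yr > 0" unfolding xr_def yr_def using assms(4,5) by simp_all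
  have Q: "xr^2 + tr * yr^2 \<ge> 2 * (xr * yr)"
  proof -
    have "tr * yr^2 \<ge> yr^2" using tr1 mult_right_mono[of 1 tr "yr^2"] by simp
    moreover have "xr^2 + yr^2 \<ge> 2 * (xr*yr)" using sum_squares_bound[of xr yr] by simp
    ultimately show ?thesis by linarith
  qed
  have XX: "cmod X ^ 4 \<ge> 4 * (xr*yr)^2"
  proof -
    have "cmod X ^ 4 = (xr^2 + tr * yr^2)^2" using X2 unfolding xr_def yr_def tr_def
      by (metis power_mult numeral_times_numeral semiring_norm(2) power2_eq_square mult_2 numeral_Bit0)
    moreover have "(2 * (xr*yr))^2 \<le> (xr^2 + tr * yr^2)^2" using Q xr0 by (intro power_mono) auto
    ultimately show ?thesis by (simp add: power_mult_distrib)
  qed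
  have xy2: "(xr*yr)^2 > (64*tr^3)^2" using xy tr1 by (intro power_strict_mono) auto
  have nxi: "cmod (xi_fn t \<alpha> x y ^ 4) \<ge> 16 * (64*tr^3)^2"
  proof -
    have "cmod (xi_fn t \<alpha> x y ^ 4) = 4 * cmod (1 + \<i> * S) * cmod X ^ 4" unfolding xi4 by (simp only: norm_mult norm_power) simp
    also have "\<dots> \<ge> 4 * 1 * (4 * (xr*yr)^2)" using A1 XX by (intro mult_mono) auto
    finally show ?thesis using xy2 by simp
  qed
  have zb: "cmod (1 - w^4) = 8 * P / cmod (xi_fn t \<alpha> x y ^ 4)" unfolding zeq P_def
    by (simp add: norm_divide) (metis norm_of_int abs_of_pos assms(6) of_int_pos)
  have small: "cmod (1 - w^4) < 1/10^8"
  proof -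
    have pos: "16 * (64*tr^3)^2 > 0" using tr1 by simp
    have "cmod (1 - w^4) \<le> 8 * tr^2 / (16 * (64*tr^3)^2)" unfolding zb
      using Pt P0 nxi pos by (intro frac_le) auto
    also have "\<dots> = 1 / (8192 * tr^4)" using tr1 by (simp add: field_simps power2_eq_square power3_eq_cube power4_eq_xxxx)
    also have "\<dots> < 1/10^8"
    proof -
      have "tr^4 \<ge> 204^4" using tr1 by (intro power_mono) auto
      then have "8192 * tr^4 > 10^8" by simp
      thus ?thesis by (intro divide_strict_left_mono) (use tr1 in auto)
    qed
    finally show ?thesis .
  qed
  have nz: "w^4 \<noteq> 1"
  proof
    assume "w^4 = 1"
    then have "cmod (1 - w^4) = 0" by simp
    with zb P0 nxi tr1 show False by simp
  qed
  show ?thesis using main2[OF assms(9) g1 g2 g3 g4 small nz] unfolding z w_def .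
qed
end
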